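(* Let $C_*^{\mathbb{Q}}$ be a chain complex of $\mathbb{Q}$-vector spaces, $C_*^{\mathbb{R}}=C_*^{\mathbb{Q}}\otimes_{\mathbb{Q}}\mathbb{R}$, and let $\|\cdot\|$ be a norm on $C_*^{\mathbb{R}}$. Let $a\in Z_n^{\mathbb{R}}$ be a real $n$-cycle whose homology class is rational, i.e. $[a]\in H_n(C_*^{\mathbb{Q}})\subseteq H_n(C_*^{\mathbb{R}})$. Then for every $\varepsilon>0$ there is a rational $n$-cycle $a'\in Z_n^{\mathbb{Q}}$ with $[a']=[a]$ in $H_n(C_*^{\mathbb{R}})$ and $\|a-a'\|\leq\varepsilon$.
   Context: $Z_n^{\mathbb{R}}$ and $Z_n^{\mathbb{Q}}$ denote the $n$-cycles of $C_*^{\mathbb{R}}$ and $C_*^{\mathbb{Q}}$; $H_n(C_*^{\mathbb{Q}})$ is viewed inside $H_n(C_*^{\mathbb{R}})\cong H_n(C_*^{\mathbb{Q}})\otimes_{\mathbb{Q}}\mathbb{R}$. *)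

theory Defs
  imports "HOL-Analysis.Analysis"
begin

text \<open>A chain complex of rational vector spaces together with its real extension
  C^R = C^Q \<otimes>_Q R, all degrees living inside one ambient real vector space 'v:
  CR k is the (real) chain group in degree k, CQ k the rational chain group in degree k,
  d k the boundary map C_k \<rightarrow> C_{k-1}.\<close>

definition rat_subspace :: "'v::real_vector set \<Rightarrow> bool" where
  "rat_subspace S \<longleftrightarrow> 0 \<in> S \<and> (\<forall>x\<in>S. \<forall>y\<in>S. x + y \<in> S)
     \<and> (\<forall>q::rat. \<forall>x\<in>S. of_rat q *\<^sub>R x \<in> S)"

definition rat_independent :: "'v::real_vector set \<Rightarrow> bool" where
  "rat_independent S \<longleftrightarrow> (\<forall>T c. finite T \<longrightarrow> T \<subseteq> S \<longrightarrow>
      (\<Sum>v\<in>T. of_rat (c v) *\<^sub>R v) = 0 \<longrightarrow> (\<forall>v\<in>T. c v = (0::rat)))"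

text \<open>The real space R is the scalar extension of the rational subspace Q:
  Q spans R over the reals and Q-linearly independent families in Q stay
  R-linearly independent (i.e. the canonical map Q \<otimes>_Q \<real> \<rightarrow> R is an isomorphism).\<close>
definition rat_form_of :: "'v::real_vector set \<Rightarrow> 'v set \<Rightarrow> bool" where
  "rat_form_of Q R \<longleftrightarrow> rat_subspace Q \<and> span Q = R
     \<and> (\<forall>S\<subseteq>Q. rat_independent S \<longrightarrow> independent S)"

definition rat_chain_complex ::
  "(int \<Rightarrow> 'v::real_vector set) \<Rightarrow> (int \<Rightarrow> 'v set) \<Rightarrow> (int \<Rightarrow> 'v \<Rightarrow> 'v) \<Rightarrow> bool" where
  "rat_chain_complex CQ CR d \<longleftrightarrow>
     (\<forall>k. rat_form_of (CQ k) (CR k))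
   \<and> (\<forall>k. \<forall>x\<in>CR k. \<forall>y\<in>CR k. d k (x + y) = d k x + d k y)
   \<and> (\<forall>k. \<forall>c. \<forall>x\<in>CR k. d k (c *\<^sub>R x) = c *\<^sub>R d k x)
   \<and> (\<forall>k. d k ` CR k \<subseteq> CR (k - 1))
   \<and> (\<forall>k. d k ` CQ k \<subseteq> CQ (k - 1))
   \<and> (\<forall>k. \<forall>x\<in>CR k. d (k - 1) (d k x) = 0)"

definition norm_on :: "'v::real_vector set \<Rightarrow> ('v \<Rightarrow> real) \<Rightarrow> bool" where
  "norm_on S N \<longleftrightarrow> (\<forall>x\<in>S. 0 \<le> N x \<and> (N x = 0 \<longleftrightarrow> x = 0))
     \<and> (\<forall>x\<in>S. \<forall>y\<in>S. N (x + y) \<le> N x + N y)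
     \<and> (\<forall>c. \<forall>x\<in>S. N (c *\<^sub>R x) = \<bar>c\<bar> * N x)"

definition cycles :: "(int \<Rightarrow> 'v::real_vector set) \<Rightarrow> (int \<Rightarrow> 'v \<Rightarrow> 'v) \<Rightarrow> int \<Rightarrow> 'v set" where
  "cycles C d n = {x \<in> C n. d n x = 0}"

definition homologous_R ::
  "(int \<Rightarrow> 'v::real_vector set) \<Rightarrow> (int \<Rightarrow> 'v \<Rightarrow> 'v) \<Rightarrow> int \<Rightarrow> 'v \<Rightarrow> 'v \<Rightarrow> bool" where
  "homologous_R CR d n x y \<longleftrightarrow> x - y \<in> d (n + 1) ` CR (n + 1)"

end

theory Submission
  imports Defs
begin

lemma rs_sum:
  assumes "rat_subspace S" "finite T" "T \<subseteq> S"
  shows "(\<Sum>v\<in>T. of_rat (s v) *\<^sub>R v) \<in> S"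
  using assms(2,3)
proof (induction T rule: finite_induct)
  case empty then show ?case using assms(1) by (simp add: rat_subspace_def)
next
  case (insert x F) then show ?case using assms(1) by (simp add: rat_subspace_def)
qed

lemma d_sum:
  fixes f :: "'a::real_vector \<Rightarrow> 'b::real_vector"
  assumes add: "\<forall>x\<in>span Q. \<forall>y\<in>span Q. f (x + y) = f x + f y"
    and sc: "\<forall>c. \<forall>x\<in>span Q. f (c *\<^sub>R x) = c *\<^sub>R f x"
    and "finite T" "T \<subseteq> span Q"
  shows "f (\<Sum>v\<in>T. u v *\<^sub>R v) = (\<Sum>v\<in>T. u v *\<^sub>R f v)"
  using assms(3,4)
proof (induction T rule: finite_induct)
  case empty
  have "f 0 = f (0 *\<^sub>R 0)" by simp
  also have "\<dots> = 0 *\<^sub>R f 0" using sc span_zero by blast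
  also have "\<dots> = 0" by simp
  finally have "f 0 = 0" .
  then show ?case by simp
next
  case (insert x F)
  have "(\<Sum>v\<in>F. u v *\<^sub>R v) \<in> span Q" using insert
    by (intro span_sum span_scale) (auto intro: span_base span_superset)
  moreover have "u x *\<^sub>R x \<in> span Q" using insert by (simp add: span_scale)
  ultimately show ?case using insert add sc by simp
qed

lemma N_sum:
  assumes "norm_on S N" "0 \<in> S" "\<forall>x\<in>S. \<forall>y\<in>S. x + y \<in> S" "finite T" "\<forall>v\<in>T. g v \<in> S"
  shows "N (\<Sum>v\<in>T. g v) \<le> (\<Sum>v\<in>T. N (g v))"
  using assms(4,5)
proof (induction T rule: finite_induct)
  case empty
  from assms(1) have "\<forall>x\<in>S. (N x = 0) = (x = 0)" by (simp add: norm_on_def)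
  then have "N 0 = 0" using assms(2) by blast
  then show ?case by simp
next
  case (insert x F)
  have gF: "\<forall>v\<in>F. g v \<in> S" using insert(4) by blast
  have s: "(\<Sum>v\<in>F. g v) \<in> S" using insert(1) gF
  proof (induction F rule: finite_induct)
    case (insert y G) then show ?case using assms(3) by auto
  qed (use insert assms(2) in auto)
  have "N (g x + (\<Sum>v\<in>F. g v)) \<le> N (g x) + N (\<Sum>v\<in>F. g v)"
    using assms(1) s insert(4) by (simp add: norm_on_def)
  then show ?case using insert by simp
qed

theorem lemma2p14:
  fixes CQ CR :: "int \<Rightarrow> 'v::real_vector set"
    and d :: "int \<Rightarrow> 'v \<Rightarrow> 'v"
    and N :: "int \<Rightarrow> 'v \<Rightarrow> real"
    and n :: int and a :: 'v
  assumes "rat_chain_complex CQ CR d"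
    and "\<forall>k. norm_on (CR k) (N k)"
    and "a \<in> cycles CR d n"
    and "\<exists>b\<in>cycles CQ d n. homologous_R CR d n a b"
  shows "\<forall>\<epsilon>>0. \<exists>a'\<in>cycles CQ d n. homologous_R CR d n a' a \<and> N n (a - a') \<le> \<epsilon>"
proof (intro allI impI)
  fix \<epsilon> :: real assume ep: "\<epsilon> > 0"
  have rf: "\<And>k. rat_form_of (CQ k) (CR k)" using assms(1) by (simp add: rat_chain_complex_def)
  have CRs: "\<And>k. CR k = span (CQ k)" using rf by (simp add: rat_form_of_def)
  have rs: "\<And>k. rat_subspace (CQ k)" using rf by (simp add: rat_form_of_def)
  have QR: "\<And>k. CQ k \<subseteq> CR k" using CRs span_superset by blast
  have add: "\<And>k. \<forall>x\<in>span (CQ k). \<forall>y\<in>span (CQ k). d k (x + y) = d k x + d k y"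
    using assms(1) CRs by (simp add: rat_chain_complex_def)
  have sc: "\<And>k. \<forall>c. \<forall>x\<in>span (CQ k). d k (c *\<^sub>R x) = c *\<^sub>R d k x"
    using assms(1) CRs by (simp add: rat_chain_complex_def)
  have dR: "\<And>k x. x \<in> CR k \<Longrightarrow> d k x \<in> CR (k - 1)" 
  proof -
    have "\<forall>k. d k ` CR k \<subseteq> CR (k - 1)" using assms(1) by (simp add: rat_chain_complex_def)
    then show "\<And>k x. x \<in> CR k \<Longrightarrow> d k x \<in> CR (k - 1)" by blast
  qed
  have dQ: "\<And>k x. x \<in> CQ k \<Longrightarrow> d k x \<in> CQ (k - 1)"
  proof -
    have "\<forall>k. d k ` CQ k \<subseteq> CQ (k - 1)" using assms(1) by (simp add: rat_chain_complex_def)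
    then show "\<And>k x. x \<in> CQ k \<Longrightarrow> d k x \<in> CQ (k - 1)" by blast
  qed
  have dd: "\<And>k x. x \<in> CR k \<Longrightarrow> d (k - 1) (d k x) = 0" using assms(1) by (auto simp: rat_chain_complex_def)
  obtain b where b: "b \<in> cycles CQ d n" and hb: "a - b \<in> d (n + 1) ` CR (n + 1)"
    using assms(4) by (auto simp: homologous_R_def)
  obtain c where c: "c \<in> CR (n + 1)" and ac: "a - b = d (n + 1) c" using hb by auto
  obtain T u where T: "finite T" "T \<subseteq> CQ (n + 1)" and cT: "c = (\<Sum>v\<in>T. u v *\<^sub>R v)"
    using c CRs[of "n+1"] by (auto simp: span_explicit)
  define \<delta> where "\<delta> v = \<epsilon> / ((real (card T) + 1) * (N n (d (n + 1) v) + 1))" for v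
  have Nnn: "\<And>v. v \<in> T \<Longrightarrow> N n (d (n + 1) v) \<ge> 0"
  proof -
    fix v assume "v \<in> T"
    then have "d (n + 1) v \<in> CR n" using T QR dR[of v "n+1"] by auto
    then show "N n (d (n + 1) v) \<ge> 0" using assms(2) by (auto simp: norm_on_def)
  qed
  have ex: "\<forall>v. \<exists>q::rat. v \<in> T \<longrightarrow> \<bar>u v - of_rat q\<bar> < \<delta> v"
  proof
    fix v
    show "\<exists>q::rat. v \<in> T \<longrightarrow> \<bar>u v - of_rat q\<bar> < \<delta> v"
    proof (cases "v \<in> T")
      case True
      then have "\<delta> v > 0" using ep Nnn[OF True] by (simp add: \<delta>_def)
      then obtain r where "r \<in> \<rat>" "u v - \<delta> v < r" "r < u v + \<delta> v"
        using Rats_dense_in_real[of "u v - \<delta> v" "u v + \<delta> v"] by auto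
      then obtain q where "r = of_rat q" by (auto elim: Rats_cases)
      then show ?thesis using \<open>u v - \<delta> v < r\<close> \<open>r < u v + \<delta> v\<close> by (intro exI[of _ q]) auto
    qed simp
  qed
  obtain s where s0: "\<forall>v. v \<in> T \<longrightarrow> \<bar>u v - of_rat (s v)\<bar> < \<delta> v"
    using choice[OF ex] by blast
  have s: "\<And>v. v \<in> T \<Longrightarrow> \<bar>u v - of_rat (s v)\<bar> < \<delta> v" using s0 by blast
  define c' where "c' = (\<Sum>v\<in>T. of_rat (s v) *\<^sub>R v)"
  have c'Q: "c' \<in> CQ (n + 1)" unfolding c'_def using rs T by (rule rs_sum)
  have TR: "T \<subseteq> span (CQ (n + 1))" using T span_superset by blast
  have dc: "d (n + 1) c = (\<Sum>v\<in>T. u v *\<^sub>R d (n + 1) v)"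
    unfolding cT using d_sum[OF add sc T(1) TR] .
  have dc': "d (n + 1) c' = (\<Sum>v\<in>T. of_rat (s v) *\<^sub>R d (n + 1) v)"
    unfolding c'_def using d_sum[OF add sc T(1) TR] .
  define a' where "a' = b + d (n + 1) c'"
  have bQ: "b \<in> CQ n" and db: "d n b = 0" using b by (auto simp: cycles_def)
  have dc'Q: "d (n + 1) c' \<in> CQ n" using dQ[OF c'Q] by simp
  have a'Q: "a' \<in> CQ n" using rs[of n] bQ dc'Q by (simp add: a'_def rat_subspace_def)
  have "d n a' = d n b + d n (d (n + 1) c')"
    using add[of n] bQ dc'Q QR CRs unfolding a'_def by blast
  also have "d n (d (n + 1) c') = 0" using dd[of c' "n+1"] c'Q QR by auto
  finally have "d n a' = 0" using db by simp
  then have a'c: "a' \<in> cycles CQ d n" using a'Q by (simp add: cycles_def)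
  define e where "e = (\<Sum>v\<in>T. (of_rat (s v) - u v) *\<^sub>R v)"
  have eR: "e \<in> CR (n + 1)" unfolding e_def CRs using TR
    by (intro span_sum span_scale) auto
  have de: "d (n + 1) e = d (n + 1) c' - d (n + 1) c"
    unfolding e_def d_sum[OF add sc T(1) TR] dc dc'
    by (simp add: scaleR_diff_left sum_subtractf)
  have "a' - a = d (n + 1) c' - d (n + 1) c" using ac unfolding a'_def by (simp add: algebra_simps)
  then have hom: "homologous_R CR d n a' a" unfolding homologous_R_def using de eR
    by (metis image_eqI)
  have aa: "a - a' = (\<Sum>v\<in>T. (u v - of_rat (s v)) *\<^sub>R d (n + 1) v)"
    using ac unfolding a'_def dc dc'
    by (simp add: scaleR_diff_left sum_subtractf algebra_simps)
  have dvR: "\<And>v. v \<in> T \<Longrightarrow> d (n + 1) v \<in> CR n" using T QR dR[of _ "n+1"] by auto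
  have CRsub: "0 \<in> CR n" "\<forall>x\<in>CR n. \<forall>y\<in>CR n. x + y \<in> CR n"
    using CRs[of n] by (auto intro: span_zero span_add)
  have "N n (a - a') \<le> (\<Sum>v\<in>T. N n ((u v - of_rat (s v)) *\<^sub>R d (n + 1) v))"
    unfolding aa using N_sum[OF assms(2)[rule_format, of n] CRsub T(1)] dvR
    CRs[of n] by (simp add: span_scale)
  also have "\<dots> = (\<Sum>v\<in>T. \<bar>u v - of_rat (s v)\<bar> * N n (d (n + 1) v))"
    using assms(2) dvR by (intro sum.cong) (auto simp: norm_on_def)
  also have "\<dots> \<le> (\<Sum>v\<in>T. \<epsilon> / (real (card T) + 1))"
  proof (rule sum_mono)
    fix v assume v: "v \<in> T"
    let ?M = "N n (d (n + 1) v)"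
    have M: "?M \<ge> 0" using Nnn[OF v] .
    have "\<bar>u v - of_rat (s v)\<bar> * ?M \<le> \<delta> v * ?M"
      using s[OF v] M by (intro mult_right_mono) auto
    also have "\<dots> = \<epsilon> / (real (card T) + 1) * (?M / (?M + 1))"
      by (simp add: \<delta>_def field_simps)
    also have "\<dots> \<le> \<epsilon> / (real (card T) + 1) * 1"
      using ep M by (intro mult_left_mono) auto
    finally show "\<bar>u v - of_rat (s v)\<bar> * ?M \<le> \<epsilon> / (real (card T) + 1)" by simp
  qed
  also have "\<dots> = real (card T) * \<epsilon> / (real (card T) + 1)" by simp
  also have "\<dots> \<le> \<epsilon>" using ep by (simp add: field_simps)
  finally show "\<exists>a'\<in>cycles CQ d n. homologous_R CR d n a' a \<and> N n (a - a') \<le> \<epsilon>"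
    using a'c hom by blast
qed

end
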